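(* Let $1\le k<n$ be integers and $K=\{p\in[0,1]^n:\sum_i p_i=k\}$. For $U\subseteq[n]$ with $|U|=k$ define $$g_U(x)=\frac{1}{n-k}\Big(\prod_{i\in U}x_i\Big)\Big(\prod_{i\notin U}(1-x_i)\Big)\Big(\sum_{i\notin U}x_i\Big),\qquad f_U(x)=\frac{g_U(x)}{\sum_{V\subseteq[n],|V|=k}g_V(x)},$$ and let $e_V\in\{0,1\}^n$ denote the indicator vector of $V$. Define $\overline f_U:K\to[0,1]$ by $\overline f_U(x)=f_U(x)$ if $x\in K$ is not of the form $e_V$ for any $V$ with $|V|=k$, $\overline f_U(e_U)=1$, and $\overline f_U(e_V)=0$ for $|V|=k$, $V\neq U$. Then $\overline f_U$ is well defined (i.e. the denominator of $f_U$ is nonzero at every point of $K$ not of the form $e_V$) and is continuous on all of $K$. *)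

theory Defs
  imports "HOL-Analysis.Analysis"
begin

text \<open>The ground set [n] is the finite index type 'n, with n = CARD('n).\<close>

definition Kset :: "nat \<Rightarrow> (real^'n) set" where
  "Kset k = {p. (\<forall>i. 0 \<le> p$i \<and> p$i \<le> 1) \<and> (\<Sum>i\<in>UNIV. p$i) = real k}"

definition gU :: "nat \<Rightarrow> 'n set \<Rightarrow> real^'n \<Rightarrow> real" where
  "gU k U x = (1 / real (CARD('n) - k)) * (\<Prod>i\<in>U. x$i) * (\<Prod>i\<in>- U. 1 - x$i)
      * (\<Sum>i\<in>- U. x$i)"

definition gsum :: "nat \<Rightarrow> real^'n \<Rightarrow> real" where
  "gsum k x = (\<Sum>V\<in>{V :: 'n set. card V = k}. gU k V x)"

definition fU :: "nat \<Rightarrow> 'n set \<Rightarrow> real^'n \<Rightarrow> real" where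
  "fU k U x = gU k U x / gsum k x"

definition ind_vec :: "'n set \<Rightarrow> real^'n" where
  "ind_vec V = (\<chi> i. if i \<in> V then 1 else 0)"

definition fbar :: "nat \<Rightarrow> 'n set \<Rightarrow> real^'n \<Rightarrow> real" where
  "fbar k U x = (if \<exists>V. card V = k \<and> x = ind_vec V
                 then (if x = ind_vec U then 1 else 0)
                 else fU k U x)"

end

theory Submission
  imports Defs
begin

lemma weier:
  fixes a :: "'a \<Rightarrow> real"
  assumes "finite A" "\<forall>i\<in>A. 0 \<le> a i \<and> a i \<le> 1"
  shows "1 - sum a A \<le> (\<Prod>i\<in>A. 1 - a i)"
  using assms
proof (induction A rule: finite_induct)
  case empty then show ?case by simp
next
  case (insert j F)
  have IH: "1 - sum a F \<le> (\<Prod>i\<in>F. 1 - a i)" using insert by auto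
  have aj: "0 \<le> a j" "a j \<le> 1" using insert by auto
  have sF: "0 \<le> sum a F" using insert by (auto intro: sum_nonneg)
  have "(1 - a j) * (1 - sum a F) \<le> (1 - a j) * (\<Prod>i\<in>F. 1 - a i)"
    using IH aj by (intro mult_left_mono) auto
  moreover have "1 - (a j + sum a F) \<le> (1 - a j) * (1 - sum a F)"
    using aj sF by (simp add: algebra_simps)
  ultimately show ?case using insert by simp
qed

lemma prod_le_member:
  fixes a :: "'a \<Rightarrow> real"
  assumes "finite A" "j \<in> A" "\<forall>i\<in>A. 0 \<le> a i \<and> a i \<le> 1"
  shows "prod a A \<le> a j"
proof -
  have "prod a A = a j * prod a (A - {j})" using assms by (simp add: prod.remove)
  moreover have "prod a (A - {j}) \<le> 1" using assms by (intro prod_le_1) auto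
  moreover have "0 \<le> a j" using assms by auto
  ultimately show ?thesis by (simp add: mult_left_le)
qed

lemma ind_vec_inj: "ind_vec V = ind_vec W \<Longrightarrow> V = W"
  unfolding ind_vec_def by (auto simp: vec_eq_iff split: if_splits)

lemma gU_nonneg:
  assumes "x \<in> Kset k"
  shows "0 \<le> gU k V x"
  using assms unfolding gU_def Kset_def
  by (auto intro!: divide_nonneg_nonneg mult_nonneg_nonneg prod_nonneg sum_nonneg)

lemma gsum_ge:
  assumes "x \<in> Kset k" "card V = k"
  shows "gU k V x \<le> gsum k x"
  unfolding gsum_def using assms gU_nonneg
  by (intro member_le_sum) auto

lemma gU_cont: "continuous_on UNIV (gU k V)"
  unfolding gU_def by (intro continuous_intros)

lemma gsum_cont: "continuous_on UNIV (gsum k)"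
  unfolding gsum_def using gU_cont by (intro continuous_intros) auto

lemma K_split:
  assumes "y \<in> Kset k" "card W = k"
  shows "(\<Sum>i\<in>W. 1 - y$i) = (\<Sum>i\<in>-W. y$i)"
proof -
  have "(\<Sum>i\<in>UNIV. y$i) = (\<Sum>i\<in>W. y$i) + (\<Sum>i\<in>-W. y$i)"
    by (metis Compl_partition2 sum.subset_diff finite subset_UNIV Diff_Compl double_compl
        Compl_eq_Diff_UNIV add.commute)
  then show ?thesis using assms unfolding Kset_def by (simp add: sum_subtractf)
qed


lemma gsum_pos:
  fixes x :: "real^'n"
  assumes "k < CARD('n)" "x \<in> Kset k" "\<nexists>V::'n set. card V = k \<and> x = ind_vec V"
  shows "0 < gsum k x"
proof -
  define A where "A = {i. x$i = 1}"
  define B where "B = {i. x$i > 0}"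
  have x01: "\<And>i. 0 \<le> x$i \<and> x$i \<le> 1" and xs: "(\<Sum>i\<in>UNIV. x$i) = real k"
    using assms(2) unfolding Kset_def by auto
  have AB: "A \<subseteq> B" unfolding A_def B_def by auto
  have "(\<Sum>i\<in>UNIV. x$i) = (\<Sum>i\<in>B. x$i)"
    by (rule sum.mono_neutral_left[symmetric]) (auto simp: B_def, metis x01 antisym not_less)
  also have "\<dots> = (\<Sum>i\<in>A. x$i) + (\<Sum>i\<in>B-A. x$i)"
    using AB by (metis add.commute finite sum.subset_diff)
  also have "(\<Sum>i\<in>A. x$i) = real (card A)" unfolding A_def by simp
  finally have eq: "real k = real (card A) + (\<Sum>i\<in>B-A. x$i)" using xs by simp
  have ne: "B - A \<noteq> {}"
  proof
    assume e: "B - A = {}"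
    then have "card A = k" using eq by (simp only: sum.empty)
    moreover have "x = ind_vec A"
    proof -
      have "x$i = (if i \<in> A then 1 else 0)" for i
      proof (cases "i \<in> A")
        case False
        then have "i \<notin> B" using e by auto
        then show ?thesis using False x01[of i] unfolding B_def by auto
      qed (auto simp: A_def)
      then show ?thesis unfolding ind_vec_def vec_eq_iff by simp
    qed
    ultimately show False using assms(3) by blast
  qed
  have "0 < (\<Sum>i\<in>B-A. x$i)" using ne
    by (intro sum_pos) (auto simp: B_def)
  then have cA: "card A < k" using eq by linarith
  have "(\<Sum>i\<in>B-A. x$i) < (\<Sum>i\<in>B-A. 1)"
    using ne by (intro sum_strict_mono) (auto simp: A_def B_def less_le x01)
  then have "real k < real (card A) + real (card (B - A))" using eq by simp
  also have "card (B - A) = card B - card A" using AB by (simp add: card_Diff_subset)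
  finally have cB: "k < card B" using cA by linarith
  have "k - card A \<le> card (B - A)" using AB cB cA by (simp add: card_Diff_subset)
  then obtain T where T: "T \<subseteq> B - A" "card T = k - card A"
    by (metis obtain_subset_with_card_n)
  define V where "V = A \<union> T"
  have cV: "card V = k" unfolding V_def using T cA
    by (subst card_Un_disjoint) auto
  have VB: "V \<subseteq> B" "A \<subseteq> V" using T AB unfolding V_def by auto
  have "\<not> B \<subseteq> V"
  proof
    assume "B \<subseteq> V"
    then have "card B \<le> card V" by (intro card_mono) auto
    then show False using cV cB by simp
  qed
  then obtain j where j: "j \<in> B" "j \<notin> V" by blast
  have "0 < gU k V x"
    unfolding gU_def
  proof (intro mult_pos_pos prod_pos)
    show "0 < 1 / real (CARD('n) - k)" using assms(1) by simp
    show "\<And>i. i \<in> V \<Longrightarrow> 0 < x$i" using VB B_def by auto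
    show "0 < 1 - x$i" if "i \<in> -V" for i using VB x01[of i] that
      by (auto simp: A_def less_le)
    show "0 < (\<Sum>i\<in>-V. x$i)" using j x01 B_def
      by (intro sum_pos2[of _ j]) auto
  qed
  also have "\<dots> \<le> gsum k x" using gsum_ge assms cV by blast
  finally show ?thesis .
qed


lemma key_bound:
  fixes y :: "real^'n"
  assumes kn: "k < CARD('n)" and yK: "y \<in> Kset k" and cW: "card W = k" and s: "s = (\<Sum>i\<in>-W. y$i)"
    and s1: "s < 1" and cU: "card U = k" and ni: "\<nexists>V::'n set. card V = k \<and> y = ind_vec V"
  shows "\<bar>fU k U y - (if U = W then 1 else 0)\<bar>
     \<le> real (card {V::'n set. card V = k}) * real CARD('n) * s / (1-s)^2"
proof -
  define c where "c = 1 / real (CARD('n) - k)"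
  define N where "N = real (card {V::'n set. card V = k})"
  have c0: "0 < c" using kn by (simp add: c_def)
  have y01: "\<And>i. 0 \<le> y$i \<and> y$i \<le> 1" using yK unfolding Kset_def by auto
  have s0: "0 \<le> s" unfolding s using y01 by (auto intro: sum_nonneg)
  have sW: "(\<Sum>i\<in>W. 1 - y$i) = s" using K_split[OF yK cW] s by simp
  have other: "gU k V y \<le> c * real CARD('n) * s^2" if cV: "card V = k" and VW: "V \<noteq> W" for V
  proof -
    have "\<not> V \<subseteq> W" using card_subset_eq[of W V] cV cW VW by auto
    then obtain j where j: "j \<in> V" "j \<notin> W" by blast
    have "\<not> W \<subseteq> V" using card_subset_eq[of V W] cV cW VW by auto
    then obtain l where l: "l \<in> W" "l \<notin> V" by blast
    have P1: "(\<Prod>i\<in>V. y$i) \<le> s"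
    proof -
      have "(\<Prod>i\<in>V. y$i) \<le> y$j" using j y01 by (intro prod_le_member) auto
      also have "\<dots> \<le> s" unfolding s using j y01 by (intro member_le_sum) auto
      finally show ?thesis .
    qed
    have P2: "(\<Prod>i\<in>-V. 1 - y$i) \<le> s"
    proof -
      have "(\<Prod>i\<in>-V. 1 - y$i) \<le> 1 - y$l" using l y01
        by (intro prod_le_member[where a="\<lambda>i. 1 - y$i"]) auto
      also have "\<dots> \<le> s" unfolding sW[symmetric] using l y01 by (intro member_le_sum) auto
      finally show ?thesis .
    qed
    have P3: "(\<Sum>i\<in>-V. y$i) \<le> real CARD('n)"
    proof -
      have "(\<Sum>i\<in>-V. y$i) \<le> (\<Sum>i\<in>-V. 1)" using y01 by (intro sum_mono) auto
      also have "\<dots> = real (card (-V))" by simp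
      also have "\<dots> \<le> real CARD('n)" by (simp add: card_mono)
      finally show ?thesis .
    qed
    have "gU k V y = c * (\<Prod>i\<in>V. y$i) * (\<Prod>i\<in>-V. 1 - y$i) * (\<Sum>i\<in>-V. y$i)"
      unfolding gU_def c_def by simp
    also have "\<dots> \<le> c * s * s * real CARD('n)"
      using P1 P2 P3 c0 s0 y01
      by (intro mult_mono mult_nonneg_nonneg prod_nonneg sum_nonneg) auto
    finally show ?thesis by (simp add: power2_eq_square algebra_simps)
  qed
  have gW: "c * (1-s)^2 * s \<le> gU k W y"
  proof -
    have Q1: "1 - s \<le> (\<Prod>i\<in>W. y$i)"
      using weier[of W "\<lambda>i. 1 - y$i"] y01 sW by auto
    have Q2: "1 - s \<le> (\<Prod>i\<in>-W. 1 - y$i)"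
      using weier[of "-W" "\<lambda>i. y$i"] y01 s by auto
    have "(1-s) * (1-s) \<le> (\<Prod>i\<in>W. y$i) * (\<Prod>i\<in>-W. 1 - y$i)"
      using Q1 Q2 s1 by (intro mult_mono) auto
    then have "c * ((1-s) * (1-s)) * s \<le> c * ((\<Prod>i\<in>W. y$i) * (\<Prod>i\<in>-W. 1 - y$i)) * s"
      using c0 s0 by (intro mult_right_mono mult_left_mono) auto
    then show ?thesis unfolding gU_def c_def s by (simp add: power2_eq_square algebra_simps)
  qed
  define S where "S = {V::'n set. card V = k}"
  have WS: "W \<in> S" using cW S_def by simp
  have diff: "gsum k y - gU k W y \<le> N * (c * real CARD('n) * s^2)"
  proof -
    have "gsum k y = gU k W y + (\<Sum>V\<in>S-{W}. gU k V y)"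
      unfolding gsum_def S_def[symmetric] using WS by (simp add: sum.remove)
    moreover have "(\<Sum>V\<in>S-{W}. gU k V y) \<le> (\<Sum>V\<in>S-{W}. c * real CARD('n) * s^2)"
      using other by (intro sum_mono) (auto simp: S_def)
    moreover have "(\<Sum>V\<in>S-{W}. c * real CARD('n) * s^2) \<le> (\<Sum>V\<in>S. c * real CARD('n) * s^2)"
      using c0 s0 by (intro sum_mono2) auto
    ultimately show ?thesis by (simp add: N_def S_def)
  qed
  have gp: "0 < gsum k y" using gsum_pos[OF kn yK ni] .
  define B where "B = N * real CARD('n) * s / (1-s)^2"
  have B0: "0 \<le> B" unfolding B_def N_def using s0 by simp
  have "N * (c * real CARD('n) * s^2) = B * (c * (1-s)^2 * s)"
  proof -
    have ne: "(1-s)^2 \<noteq> 0" using s1 by simp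
    have "B * (c * (1-s)^2 * s) = N * real CARD('n) * s * c * s * ((1-s)^2 / (1-s)^2)"
      unfolding B_def by (simp add: algebra_simps)
    also have "\<dots> = N * (c * real CARD('n) * s^2)" using ne by (simp add: power2_eq_square)
    finally show ?thesis by (rule sym)
  qed
  also have "\<dots> \<le> B * gU k W y" using gW B0 by (intro mult_left_mono) auto
  also have "\<dots> \<le> B * gsum k y" using gsum_ge[OF yK cW] B0 by (intro mult_left_mono) auto
  finally have "gsum k y - gU k W y \<le> B * gsum k y" using diff by linarith
  then have R: "(gsum k y - gU k W y) / gsum k y \<le> B" using gp by (simp add: divide_le_eq)
  have "\<bar>fU k U y - (if U = W then 1 else 0)\<bar> \<le> (gsum k y - gU k W y) / gsum k y"
  proof (cases "U = W")
    case True
    then show ?thesis using gp gsum_ge[OF yK cW] unfolding fU_def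
      by (simp add: diff_divide_distrib)
  next
    case False
    have "gU k U y + gU k W y = (\<Sum>V\<in>{U,W}. gU k V y)" using False by simp
    also have "\<dots> \<le> gsum k y" unfolding gsum_def using cU cW gU_nonneg[OF yK]
      by (intro sum_mono2) auto
    finally have "gU k U y \<le> gsum k y - gU k W y" by simp
    then show ?thesis using False gp gU_nonneg[OF yK, of U] unfolding fU_def
      by (simp add: divide_right_mono)
  qed
  then show ?thesis using R unfolding B_def N_def by simp
qed


lemma ev_avoid:
  fixes x :: "'a::t1_space"
  assumes "finite F" "x \<notin> F"
  shows "eventually (\<lambda>y. y \<in> K \<and> y \<notin> F) (at x within K)"
proof -
  have "eventually (\<lambda>y. y \<in> -F) (nhds x)"
    using assms by (intro eventually_nhds_in_open) (auto intro: finite_imp_closed)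
  then show ?thesis unfolding eventually_at_filter by (auto elim: eventually_mono)
qed

lemma ev_in:
  "eventually (\<lambda>y. y \<in> K \<and> y \<noteq> x) (at x within K)"
  unfolding eventually_at_filter by simp

theorem lemma9:
  fixes k :: nat and U :: "'n::finite set"
  assumes "1 \<le> k" and "k < CARD('n)" and "card U = k"
  shows "(\<forall>x\<in>Kset k. (\<nexists>V::'n set. card V = k \<and> x = ind_vec V) \<longrightarrow> gsum k x \<noteq> 0)
       \<and> fbar k U ` Kset k \<subseteq> {0..1}
       \<and> continuous_on (Kset k) (fbar k U)"
proof (intro conjI)
  note kn = assms(2)
  show P1: "\<forall>x\<in>Kset k. (\<nexists>V::'n set. card V = k \<and> x = ind_vec V) \<longrightarrow> gsum k x \<noteq> 0"
    using gsum_pos[OF kn] by force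
  show "fbar k U ` Kset k \<subseteq> {0..1}"
  proof
    fix z assume "z \<in> fbar k U ` Kset k"
    then obtain x where x: "x \<in> Kset k" "z = fbar k U x" by blast
    show "z \<in> {0..1}"
    proof (cases "\<exists>V. card V = k \<and> x = ind_vec V")
      case True then show ?thesis using x by (simp add: fbar_def)
    next
      case False
      then have gp: "0 < gsum k x" using gsum_pos[OF kn x(1)] by blast
      have "0 \<le> gU k U x" "gU k U x \<le> gsum k x"
        using gU_nonneg[OF x(1)] gsum_ge[OF x(1) assms(3)] by auto
      then show ?thesis using False x gp by (simp add: fbar_def fU_def divide_le_eq)
    qed
  qed
  define Ind where "Ind = ind_vec ` {V::'n set. card V = k}"
  have finInd: "finite Ind" unfolding Ind_def by simp
  have fb: "fbar k U y = fU k U y" if "y \<notin> Ind" for y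
    using that unfolding fbar_def Ind_def by auto
  show "continuous_on (Kset k) (fbar k U)"
    unfolding continuous_on_eq_continuous_within
  proof
    fix x :: "real^'n" assume xK: "x \<in> Kset k"
    show "continuous (at x within Kset k) (fbar k U)"
    proof (cases "\<exists>W. card W = k \<and> x = ind_vec W")
      case False
      then have gp: "gsum k x \<noteq> 0" using gsum_pos[OF kn xK] by auto
      have "isCont (gU k U) x" "isCont (gsum k) x"
        using gU_cont[of k U] gsum_cont[of k] continuous_on_eq_continuous_at[of UNIV] by auto
      then have "isCont (fU k U) x" using gp unfolding fU_def[abs_def]
        by (intro continuous_intros) auto
      then have L: "(fU k U \<longlongrightarrow> fU k U x) (at x within Kset k)"
        by (metis continuous_at_imp_continuous_within continuous_within)
      have xI: "x \<notin> Ind" using False unfolding Ind_def by auto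
      have E: "eventually (\<lambda>y. fU k U y = fbar k U y) (at x within Kset k)"
        using ev_avoid[OF finInd xI, of "Kset k"] fb by (auto elim: eventually_mono)
      have "(fbar k U \<longlongrightarrow> fU k U x) (at x within Kset k)"
        using Lim_transform_eventually[OF L E] .
      then have "(fbar k U \<longlongrightarrow> fbar k U x) (at x within Kset k)"
        using fb[OF xI] by simp
      then show ?thesis by (simp add: continuous_within)
    next
      case True
      then obtain W where cW: "card W = k" and xW: "x = ind_vec W" by blast
      define t where "t = (if U = W then 1 else (0::real))"
      have "fbar k U x = (if x = ind_vec U then 1 else 0)" using True by (simp add: fbar_def)
      moreover have "(x = ind_vec U) = (U = W)" using xW ind_vec_inj by metis
      ultimately have ft: "fbar k U x = t" unfolding t_def by simp
      define s where "s = (\<lambda>y::real^'n. \<Sum>i\<in>-W. y$i)"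
      define N where "N = real (card {V::'n set. card V = k}) * real CARD('n)"
      have "(s \<longlongrightarrow> (\<Sum>i\<in>-W. x$i)) (at x within Kset k)"
        unfolding s_def by (intro tendsto_intros)
      moreover have "(\<Sum>i\<in>-W. x$i) = 0" unfolding xW ind_vec_def by simp
      ultimately have sl: "(s \<longlongrightarrow> 0) (at x within Kset k)" by simp
      have "((\<lambda>y. N * s y / (1 - s y)^2) \<longlongrightarrow> N * 0 / (1 - 0)^2) (at x within Kset k)"
        by (intro tendsto_intros sl) simp
      then have gl: "((\<lambda>y. N * s y / (1 - s y)^2) \<longlongrightarrow> 0) (at x within Kset k)" by simp
      have ev1: "eventually (\<lambda>y. s y < 1) (at x within Kset k)"
        using order_tendstoD(2)[OF sl, of 1] by simp
      have ev2: "eventually (\<lambda>y. y \<in> Kset k \<and> y \<notin> Ind - {x}) (at x within Kset k)"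
        using finInd by (intro ev_avoid) auto
      have "eventually (\<lambda>y. norm (fbar k U y - t) \<le> N * s y / (1 - s y)^2) (at x within Kset k)"
        using ev1 ev2 ev_in[of "Kset k" x]
      proof eventually_elim
        case (elim y)
        then have yI: "y \<notin> Ind" by auto
        then have ni: "\<nexists>V::'n set. card V = k \<and> y = ind_vec V" unfolding Ind_def by auto
        have yK: "y \<in> Kset k" using elim by blast
        have sy: "s y = (\<Sum>i\<in>-W. y$i)" unfolding s_def by simp
        have "\<bar>fU k U y - t\<bar> \<le> N * s y / (1 - s y)^2"
          using key_bound[OF kn yK cW sy elim(1) assms(3) ni] unfolding t_def N_def .
        then show ?case using fb[OF yI] by simp
      qed
      then have "((\<lambda>y. fbar k U y - t) \<longlongrightarrow> 0) (at x within Kset k)"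
        using gl by (rule Lim_null_comparison)
      then show ?thesis unfolding continuous_within ft by (rule LIM_zero_cancel)
    qed
  qed
qed

end
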